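(* Let $m,n\ge2$, $\lambda>0$, let $P^*=S_\lambda(C,a,b)$ for some $C\in\mathbb{R}^{m\times n}$ and strictly positive $a\in\Delta_m,b\in\Delta_n$, and let $P^{(\tau)}\in\mathbb{R}^{m\times n}$ (e.g. the output of $\tau$ Sinkhorn iterations). Let $L:\mathbb{R}^{m\times n}\to\mathbb{R}$ be twice continuously differentiable. Let $\sigma_+,\sigma_-,C_1,C_2,\epsilon>0$ be such that $\|P^*-P^{(\tau)}\|_F<\epsilon$ and, for every $P$ with $\|P-P^*\|_F<\epsilon$: $\min_{i,j}P_{i,j}\ge\sigma_-$, $\max_{i,j}P_{i,j}\le\sigma_+$, $\|\nabla L(P)\|_2\le C_1$ and $\|\nabla^2L(P)\|_F\le C_2$. Let $\kappa=\|\tilde E^\dagger\|_2$ where $\tilde E^\dagger$ is the Moore–Penrose pseudoinverse. For entrywise positive $P$ with $p=\mathrm{vec}(P)$, $D=\mathrm{diag}(p)$, $g(P)=\mathrm{vec}(\nabla L(P))$, define $$g_{ab}(P):=\bigl(\tilde E^\top D\tilde E\bigr)^{-1}\tilde E^\top D\,g(P)\in\mathbb{R}^{m+n-1},\qquad g_C(P):=-\lambda^{-1}\bigl(D\,g(P)-D\tilde E\,g_{ab}(P)\bigr)\in\mathbb{R}^{mn}.$$ Then $$\|g_{ab}(P^* )-g_{ab}(P^{(\tau)})\|_2\le\kappa\sqrt{\frac{\sigma_+}{\sigma_-}}\Bigl(\frac{C_1}{\sigma_-}+C_2\Bigr)\|P^*-P^{(\tau)}\|_F,$$ $$\|g_C(P^*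 )-g_C(P^{(\tau)})\|_2\le\lambda^{-1}\sigma_+\Bigl(\frac{C_1}{\sigma_-}+C_2\Bigr)\|P^*-P^{(\tau)}\|_F.$$
   Context: $\Delta_m=\{a\in\mathbb{R}^m: a_i\ge 0,\ \sum_i a_i=1\}$; $\Pi(a,b)=\{P\ge0: P\mathbb{1}_n=a,\ P^\top\mathbb{1}_m=b\}$; $h(P)=-\sum_{i,j}P_{i,j}(\log P_{i,j}-1)$; $S_\lambda(C,a,b)=\arg\min_{P\in\Pi(a,b)}\langle P,C\rangle_F-\lambda h(P)$. Vectorization is column-major ($\mathrm{vec}(X)_{(j-1)m+i}=X_{i,j}$). $E=[\mathbb{1}_n\otimes I_m,\ I_n\otimes\mathbb{1}_m]\in\mathbb{R}^{mn\times(m+n)}$ and $\tilde E$ is $E$ with its last column deleted. The Hessian $\nabla^2 L(P)$ is taken with respect to $\mathrm{vec}(P)$. For $P\in\Pi(a,b)$ entrywise positive, $g_{ab}(P)$ equals $[\nabla_a\ell;\nabla_{\tilde b}\ell]$ and $g_C(P)$ equals $\mathrm{vec}(\nabla_C\ell)$ as computed by the implicit backward pass (Algorithm 1, in which $\tilde E^\top D\tilde E=\begin{bmatrix}\mathrm{diag}(P\mathbb{1}_n)&P_{:,1:n-1}\\P_{:,1:n-1}^\top&\mathrm{diag}(P_{:,1:n-1}^\top\mathbb{1}_m)\end{bmatrix}$); the gradient with respect to $b$ is $[g_{\tilde b};0]$, so the same bound holds for the full $[a;b]$-gradient. *)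

theory Defs
  imports "HOL-Analysis.Analysis"
begin

text \<open>An m x n matrix is an element of real^'c^'r with row index type 'r
 (m = CARD('r)) and column index type 'c option (n = CARD('c option) = CARD('c) + 1).
 The column index None plays the role of the last column n, i.e. the one whose
 b-coordinate is dropped in E-tilde. vec(P) is a vector indexed by 'r x 'c option
 (entry (i,j) = P_ij); the ordering of the mn coordinates is immaterial for all norms.
 Vectors in R^(m+n) are indexed by 'r + 'c option, vectors in R^(m+n-1) by 'r + 'c.\<close>

definition prob_simplex :: "('i::finite \<Rightarrow> real) \<Rightarrow> bool" where
  "prob_simplex a \<longleftrightarrow> (\<forall>i. a i \<ge> 0) \<and> (\<Sum>i\<in>UNIV. a i) = 1"

definition transport_polytope ::
  "real^'r::finite \<Rightarrow> real^'k::finite \<Rightarrow> (real^'k^'r) set" where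
  "transport_polytope a b = {P. (\<forall>i j. P$i$j \<ge> 0)
      \<and> (\<forall>i. (\<Sum>j\<in>UNIV. P$i$j) = a$i) \<and> (\<forall>j. (\<Sum>i\<in>UNIV. P$i$j) = b$j)}"

definition entropy :: "real^'k::finite^'r::finite \<Rightarrow> real" where
  "entropy P = - (\<Sum>i\<in>UNIV. \<Sum>j\<in>UNIV. P$i$j * (ln (P$i$j) - 1))"

definition frob_inner :: "real^'k::finite^'r::finite \<Rightarrow> real^'k^'r \<Rightarrow> real" where
  "frob_inner P C = (\<Sum>i\<in>UNIV. \<Sum>j\<in>UNIV. P$i$j * C$i$j)"

definition sinkhorn_plan ::
  "real \<Rightarrow> real^'k::finite^'r::finite \<Rightarrow> real^'r \<Rightarrow> real^'k \<Rightarrow> real^'k^'r" where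
  "sinkhorn_plan lam C a b = (THE P. P \<in> transport_polytope a b \<and>
     (\<forall>Q\<in>transport_polytope a b.
        frob_inner P C - lam * entropy P \<le> frob_inner Q C - lam * entropy Q))"

text \<open>Gradient nabla L(P) (a matrix, w.r.t. the Frobenius inner product, which is the
 inner product of real^'k^'r) and Frobenius norm of the Hessian w.r.t. vec(P).\<close>
definition grad :: "(real^'k::finite^'r::finite \<Rightarrow> real) \<Rightarrow> real^'k^'r \<Rightarrow> real^'k^'r" where
  "grad L P = (THE G. (L has_derivative (\<lambda>X. G \<bullet> X)) (at P))"

definition hessian_frob :: "(real^'k::finite^'r::finite \<Rightarrow> real) \<Rightarrow> real^'k^'r \<Rightarrow> real" where
  "hessian_frob L P = sqrt (\<Sum>(k,l)\<in>UNIV.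
      (norm (frechet_derivative (grad L) (at P) (axis k (axis l 1))))\<^sup>2)"

definition twice_cont_diff :: "(real^'k::finite^'r::finite \<Rightarrow> real) \<Rightarrow> bool" where
  "twice_cont_diff L \<longleftrightarrow> (\<forall>P. L differentiable (at P)) \<and> (\<forall>P. grad L differentiable (at P))
     \<and> (\<forall>X. continuous_on UNIV (\<lambda>P. frechet_derivative (grad L) (at P) X))"

definition vecm :: "real^'k::finite^'r::finite \<Rightarrow> real^('r \<times> 'k)" where
  "vecm P = (\<chi> x. P $ fst x $ snd x)"

definition diagm :: "real^'i::finite \<Rightarrow> real^'i^'i" where
  "diagm p = (\<chi> i j. if i = j then p$i else 0)"

text \<open>E = [1_n (x) I_m, I_n (x) 1_m]\<close>
definition Emat :: "real^('r::finite + 'c::finite option)^('r \<times> 'c option)" where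
  "Emat = (\<chi> x c. case x of (i,j) \<Rightarrow> case c of Inl i' \<Rightarrow> (if i = i' then 1 else 0)
                                | Inr j' \<Rightarrow> (if j = j' then 1 else 0))"

definition Etil :: "real^('r::finite + 'c::finite)^('r \<times> 'c option)" where
  "Etil = (\<chi> x c. case x of (i,j) \<Rightarrow> case c of Inl i' \<Rightarrow> (if i = i' then 1 else 0)
                                | Inr k \<Rightarrow> (if j = Some k then 1 else 0))"

lemma Etil_is_E_without_last_column:
  "Etil $ x $ Inl i = Emat $ x $ Inl i" "Etil $ x $ Inr k = Emat $ x $ Inr (Some k)"
  by (cases x; simp add: Etil_def Emat_def)+

definition pinv :: "real^'b::finite^'a::finite \<Rightarrow> real^'a^'b" where
  "pinv A = (THE X. A ** X ** A = A \<and> X ** A ** X = X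
                  \<and> transpose (A ** X) = A ** X \<and> transpose (X ** A) = X ** A)"

definition op2norm :: "real^'b::finite^'a::finite \<Rightarrow> real" where
  "op2norm A = onorm (\<lambda>x. A *v x)"

definition g_ab :: "(real^'c::finite option^'r::finite \<Rightarrow> real) \<Rightarrow> real^'c option^'r
                    \<Rightarrow> real^('r + 'c)" where
  "g_ab L P = (let D = diagm (vecm P); g = vecm (grad L P) in
      matrix_inv (transpose (Etil::real^('r + 'c)^('r \<times> 'c option)) ** D ** Etil)
        *v (transpose (Etil::real^('r + 'c)^('r \<times> 'c option)) ** D *v g))"

definition g_C :: "real \<Rightarrow> (real^'c::finite option^'r::finite \<Rightarrow> real) \<Rightarrow> real^'c option^'r
                    \<Rightarrow> real^('r \<times> 'c option)" where
  "g_C lam L P = (let D = diagm (vecm P); g = vecm (grad L P) in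
      - (1 / lam) *\<^sub>R (D *v g - (D ** (Etil::real^('r + 'c)^('r \<times> 'c option))) *v g_ab L P))"

end

theory Submission
  imports Defs
begin


lemma norm2_vec: "(norm (x::real^'n::finite))^2 = (\<Sum>i\<in>UNIV. (x$i)^2)"
  by (simp add: norm_vec_def L2_set_def sum_nonneg)

lemma norm2_mat: "(norm (P::real^'c::finite^'r::finite))^2 = (\<Sum>i\<in>UNIV. \<Sum>j\<in>UNIV. (P$i$j)^2)"
  by (simp add: norm_vec_def L2_set_def sum_nonneg)

lemma norm_vecm: "norm (vecm (P::real^'c::finite^'r::finite)) = norm P"
proof -
  have "(norm (vecm P))^2 = (norm P)^2"
    unfolding norm2_vec norm2_mat vecm_def
    by (simp add: sum.cartesian_product UNIV_Times_UNIV[symmetric] case_prod_beta del: UNIV_Times_UNIV)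
  then show ?thesis by (simp add: power2_eq_iff_nonneg)
qed

lemma delta_sum1: "(\<Sum>x\<in>UNIV. (if i = x then 1 else 0) * f x) = (f i :: real)" for f :: "'a::finite \<Rightarrow> real"
proof -
  have "(\<Sum>x\<in>UNIV. (if i = x then 1 else 0) * f x) = (\<Sum>x\<in>UNIV. if i = x then f x else 0)"
    by (rule sum.cong) auto
  then show ?thesis by simp
qed

lemma Etil_mv: "((Etil::real^('r::finite + 'c::finite)^('r \<times> 'c option)) *v y) $ (i,j)
   = y $ Inl i + (case j of None \<Rightarrow> 0 | Some k \<Rightarrow> y $ Inr k)"
  by (cases j) (simp_all add: Etil_def matrix_vector_mult_def UNIV_Plus_UNIV[symmetric] sum.Plus
     delta_sum1 del: UNIV_Plus_UNIV)

lemma Etil_inj: "(Etil::real^('r::finite + 'c::finite)^('r \<times> 'c option)) *v y = 0 \<Longrightarrow> y = 0"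
proof -
  assume h: "(Etil::real^('r::finite + 'c::finite)^('r \<times> 'c option)) *v y = 0"
  have a: "y $ Inl i = 0" for i
    using arg_cong[OF h, of "\<lambda>v. v $ (i,None)"] by (simp add: Etil_mv)
  have b: "y $ Inr k = 0" for k
    using arg_cong[OF h, of "\<lambda>v. v $ (undefined,Some k)"] a by (simp add: Etil_mv)
  show "y = 0" unfolding vec_eq_iff using a b by (metis sum.exhaust zero_index)
qed



lemma diag_mv: "(diagm p *v x) $ k = p $ k * (x $ k :: real)"
proof -
  have "(diagm p *v x) $ k = (\<Sum>j\<in>UNIV. (if k = j then p$k * x$j else 0))"
    unfolding diagm_def matrix_vector_mult_def vec_lambda_beta by (rule sum.cong) auto
  then show ?thesis by simp
qed

lemma inner_transpose: "(x::real^'n::finite) \<bullet> (transpose A *v v) = (A *v x) \<bullet> v"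
  by (metis dot_lmul_matrix inner_commute transpose_matrix_vector)

lemma quad_form:
  fixes A :: "real^'k::finite^'n::finite"
  shows "x \<bullet> ((transpose A ** diagm p ** A) *v x) = (\<Sum>k\<in>UNIV. p$k * ((A *v x)$k)^2)"
proof -
  have "(transpose A ** diagm p ** A) *v x = transpose A *v (diagm p *v (A *v x))"
    by (simp add: matrix_vector_mul_assoc matrix_mul_assoc)
  then have "x \<bullet> ((transpose A ** diagm p ** A) *v x) = (A *v x) \<bullet> (diagm p *v (A *v x))"
    by (simp only: inner_transpose)
  also have "\<dots> = (\<Sum>k\<in>UNIV. p$k * ((A *v x)$k)^2)"
    by (simp add: inner_vec_def diag_mv power2_eq_square mult_ac)
  finally show ?thesis .
qed

lemma M_invertible:
  fixes A :: "real^'k::finite^'n::finite"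
  assumes inj: "\<And>y. A *v y = 0 \<Longrightarrow> y = 0" and p: "\<And>k. p$k > 0"
  shows "invertible (transpose A ** diagm p ** A)"
proof -
  have "x = 0" if "(transpose A ** diagm p ** A) *v x = 0" for x
  proof -
    have "(\<Sum>k\<in>UNIV. p$k * ((A *v x)$k)^2) = 0"
      using quad_form[of x A p] that by simp
    then have "\<forall>k\<in>UNIV. p$k * ((A *v x)$k)^2 = 0"
      by (subst (asm) sum_nonneg_eq_0_iff) (auto intro!: mult_nonneg_nonneg simp: less_imp_le[OF p])
    then have "A *v x = 0" using p by (simp add: vec_eq_iff) (metis less_irrefl)
    then show ?thesis by (rule inj)
  qed
  then show ?thesis
    unfolding invertible_left_inverse by (simp add: matrix_left_invertible_ker)
qed

lemma matrix_inv_props: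
  fixes A :: "real^'n::finite^'n"
  assumes "invertible A"
  shows "A ** matrix_inv A = mat 1" "matrix_inv A ** A = mat 1"
  using someI_ex[OF assms[unfolded invertible_def]] unfolding matrix_inv_def by auto

lemma residual_orth:
  fixes A :: "real^'k::finite^'n::finite"
  assumes inj: "\<And>y. A *v y = 0 \<Longrightarrow> y = 0" and p: "\<And>k. p$k > 0"
    and x: "x = matrix_inv (transpose A ** diagm p ** A) *v (transpose A ** diagm p *v g)"
  shows "transpose A *v (diagm p *v (g - A *v x)) = 0"
proof -
  let ?M = "transpose A ** diagm p ** A"
  have I: "?M ** matrix_inv ?M = mat 1" by (rule matrix_inv_props(1)[OF M_invertible[OF inj p]])
  have "?M *v x = (?M ** matrix_inv ?M) *v (transpose A ** diagm p *v g)"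
    unfolding x by (simp add: matrix_vector_mul_assoc matrix_mul_assoc)
  then have "?M *v x = transpose A ** diagm p *v g" by (simp add: I)
  then have "transpose A *v (diagm p *v (A *v x)) = transpose A *v (diagm p *v g)"
    by (simp add: matrix_vector_mul_assoc matrix_mul_assoc)
  then show ?thesis
    by (simp add: matrix_vector_mult_diff_distrib)
qed

definition penrose :: "real^'b::finite^'a::finite \<Rightarrow> real^'a^'b \<Rightarrow> bool" where
  "penrose A X \<longleftrightarrow> A ** X ** A = A \<and> X ** A ** X = X
                  \<and> transpose (A ** X) = A ** X \<and> transpose (X ** A) = X ** A"

lemma penrose_left:
  fixes A :: "real^'k::finite^'n::finite"
  assumes inj: "\<And>y. A *v y = 0 \<Longrightarrow> y = 0" and "A ** X ** A = A"
  shows "X ** A = mat 1"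
proof -
  have "(X ** A) *v y = y" for y
  proof -
    have "A *v ((X ** A) *v y) = A *v y"
      using assms(2) by (simp add: matrix_vector_mul_assoc matrix_mul_assoc)
    then have "A *v ((X ** A) *v y - y) = 0" by (simp add: matrix_vector_mult_diff_distrib)
    then show ?thesis using inj[of "(X ** A) *v y - y"] by simp
  qed
  then show ?thesis by (metis matrix_eq matrix_vector_mul_lid)
qed

lemma penrose_unique:
  fixes A :: "real^'k::finite^'n::finite"
  assumes inj: "\<And>y. A *v y = 0 \<Longrightarrow> y = 0" and X: "penrose A X" and Y: "penrose A Y"
  shows "X = Y"
proof -
  have XA: "X ** A = mat 1" and YA: "Y ** A = mat 1"
    using penrose_left[OF inj] X Y unfolding penrose_def by auto
  have AX: "transpose (A ** X) = A ** X" and AY: "transpose (A ** Y) = A ** Y"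
    using X Y unfolding penrose_def by auto
  have AYA: "A ** Y ** A = A" using Y unfolding penrose_def by auto
  have "A ** X = transpose (A ** X)" using AX by simp
  also have "\<dots> = transpose ((A ** Y) ** (A ** X))"
    by (metis AYA matrix_mul_assoc)
  also have "\<dots> = (A ** X) ** (A ** Y)"
    by (simp only: matrix_transpose_mul[of "A**Y" "A**X"] AX AY)
  also have "\<dots> = A ** (X ** A) ** Y" by (simp add: matrix_mul_assoc)
  also have "\<dots> = A ** Y" by (simp add: XA)
  finally have eq: "A ** X = A ** Y" .
  have "X = (X ** A) ** X" by (simp add: XA)
  also have "\<dots> = X ** (A ** Y)" by (simp add: matrix_mul_assoc[symmetric] eq)
  also have "\<dots> = Y" by (simp add: matrix_mul_assoc XA)
  finally show ?thesis .
qed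

lemma diagm_one: "diagm 1 = (mat 1 :: real^'n::finite^'n)"
  by (simp add: diagm_def mat_def vec_eq_iff)

lemma penrose_exists:
  fixes A :: "real^'k::finite^'n::finite"
  assumes inj: "\<And>y. A *v y = 0 \<Longrightarrow> y = 0"
  shows "penrose A (matrix_inv (transpose A ** A) ** transpose A)"
proof -
  let ?S = "transpose A ** A"
  let ?G = "matrix_inv ?S"
  have "invertible (transpose A ** diagm 1 ** A)"
    by (rule M_invertible) (auto intro: inj)
  then have inv: "invertible ?S" by (simp add: diagm_one)
  have SG: "?S ** ?G = mat 1" and GS: "?G ** ?S = mat 1" using matrix_inv_props[OF inv] by auto
  have St: "transpose ?S = ?S" by (simp add: matrix_transpose_mul)
  have GtS: "transpose ?G ** ?S = mat 1"
    using arg_cong[OF SG, of transpose] by (simp add: matrix_transpose_mul St)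
  have Gt: "transpose ?G = ?G"
  proof -
    have "transpose ?G = transpose ?G ** (?S ** ?G)" by (simp add: SG)
    also have "\<dots> = ?G" by (metis GtS matrix_mul_assoc matrix_mul_lid)
    finally show ?thesis .
  qed
  have XA: "?G ** transpose A ** A = mat 1" using GS by (simp add: matrix_mul_assoc)
  show ?thesis unfolding penrose_def
  proof (intro conjI)
    show "A ** (?G ** transpose A) ** A = A"
      by (metis XA matrix_mul_assoc matrix_mul_rid)
    show "?G ** transpose A ** A ** (?G ** transpose A) = ?G ** transpose A"
      by (metis XA matrix_mul_assoc matrix_mul_lid)
    show "transpose (A ** (?G ** transpose A)) = A ** (?G ** transpose A)"
      by (simp add: matrix_transpose_mul Gt matrix_mul_assoc)
    show "transpose (?G ** transpose A ** A) = ?G ** transpose A ** A"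
      by (simp add: XA)
  qed
qed

lemma pinv_left:
  fixes A :: "real^'k::finite^'n::finite"
  assumes inj: "\<And>y. A *v y = 0 \<Longrightarrow> y = 0"
  shows "pinv A ** A = mat 1"
proof -
  have ex1: "\<exists>!X. penrose A X"
    using penrose_exists[OF inj] penrose_unique[OF inj] by blast
  have "penrose A (pinv A)"
    unfolding pinv_def using theI'[OF ex1[unfolded penrose_def]] unfolding penrose_def .
  then show ?thesis using penrose_left[OF inj] unfolding penrose_def by blast
qed

lemma pinv_bound:
  fixes A :: "real^'k::finite^'n::finite"
  assumes inj: "\<And>y. A *v y = 0 \<Longrightarrow> y = 0"
  shows "norm y \<le> op2norm (pinv A) * norm (A *v y)"
proof -
  have "y = pinv A *v (A *v y)" by (simp add: matrix_vector_mul_assoc pinv_left[OF inj])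
  moreover have "bounded_linear (\<lambda>x. pinv A *v x)"
    by (simp add: matrix_vector_mul_bounded_linear)
  ultimately show ?thesis unfolding op2norm_def by (metis onorm)
qed




definition wn :: "real^'n::finite \<Rightarrow> real^'n \<Rightarrow> real" where
  "wn p u = (\<Sum>k\<in>UNIV. p$k * (u$k)^2)"

lemma wn_lower: "(\<And>k. sm \<le> p$k) \<Longrightarrow> sm * (norm u)^2 \<le> wn p u"
  unfolding wn_def norm2_vec sum_distrib_left by (rule sum_mono) (simp add: mult_right_mono)

lemma wn_upper: "(\<And>k. p$k \<le> sp) \<Longrightarrow> wn p u \<le> sp * (norm u)^2"
  unfolding wn_def norm2_vec sum_distrib_left by (rule sum_mono) (simp add: mult_right_mono)

lemma wn_nonneg: "(\<And>k. 0 \<le> p$k) \<Longrightarrow> 0 \<le> wn p u"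
  unfolding wn_def by (rule sum_nonneg) simp

lemma Dnorm: "(\<And>k. 0 \<le> p$k) \<Longrightarrow> (\<And>k. p$k \<le> sp) \<Longrightarrow> (norm (diagm p *v u))^2 \<le> sp * wn p u"
  unfolding wn_def norm2_vec sum_distrib_left diag_mv
proof (rule sum_mono)
  fix k assume "\<And>k. 0 \<le> p$k" "\<And>k. p$k \<le> sp"
  then have "p$k * (p$k * (u$k)^2) \<le> sp * (p$k * (u$k)^2)"
    by (intro mult_right_mono) auto
  then show "(p$k * u$k)^2 \<le> sp * (p$k * (u$k)^2)" by (simp add: power2_eq_square mult_ac)
qed

lemma pyth:
  fixes A :: "real^'k::finite^'n::finite"
  assumes orth: "transpose A *v (diagm p *v s) = 0" and p: "\<And>k. 0 \<le> p$k"
  shows "wn p s \<le> wn p (s + A *v y)" "wn p (A *v y) \<le> wn p (s + A *v y)"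
proof -
  have cross: "(\<Sum>k\<in>UNIV. p$k * (s$k * (A *v y)$k)) = 0"
  proof -
    have "(A *v y) \<bullet> (diagm p *v s) = y \<bullet> (transpose A *v (diagm p *v s))"
      by (simp only: inner_transpose)
    then have "(A *v y) \<bullet> (diagm p *v s) = 0" using orth by simp
    then show ?thesis by (simp add: inner_vec_def diag_mv mult_ac)
  qed
  have "wn p (s + A *v y) = wn p s + wn p (A *v y) + 2 * (\<Sum>k\<in>UNIV. p$k * (s$k * (A *v y)$k))"
    unfolding wn_def by (simp add: power2_sum algebra_simps sum.distrib sum_distrib_left)
  then have e: "wn p (s + A *v y) = wn p s + wn p (A *v y)" using cross by simp
  show "wn p s \<le> wn p (s + A *v y)" "wn p (A *v y) \<le> wn p (s + A *v y)"
    using e wn_nonneg[OF p, of s] wn_nonneg[OF p, of "A *v y"] by linarith+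
qed




definition xs :: "real^'k::finite^'n::finite \<Rightarrow> real^'n \<Rightarrow> real^'n \<Rightarrow> real^'k" where
  "xs A p g = matrix_inv (transpose A ** diagm p ** A) *v (transpose A ** diagm p *v g)"

definition res :: "real^'k::finite^'n::finite \<Rightarrow> real^'n \<Rightarrow> real^'n \<Rightarrow> real^'n" where
  "res A p g = g - A *v xs A p g"

lemma xs_diff: "xs A p (g1 - g2) = xs A p g1 - xs A p g2"
  by (simp add: xs_def matrix_vector_mult_diff_distrib)

lemma res_diff: "res A p (g1 - g2) = res A p g1 - res A p g2"
  by (simp add: res_def xs_diff matrix_vector_mult_diff_distrib)

lemma res_orth:
  fixes A :: "real^'k::finite^'n::finite"
  assumes inj: "\<And>y. A *v y = 0 \<Longrightarrow> y = 0" and p: "\<And>k. p$k > 0"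
  shows "transpose A *v (diagm p *v res A p g) = 0"
  unfolding res_def
  apply (rule residual_orth)
  using inj p by (auto simp: xs_def)

lemma sq_to_le: "(a::real)^2 \<le> c * b^2 \<Longrightarrow> 0 \<le> c \<Longrightarrow> 0 \<le> b \<Longrightarrow> 0 \<le> a \<Longrightarrow> a \<le> sqrt c * b"
  by (rule power2_le_imp_le) (simp_all add: power_mult_distrib)

lemma kappa_nonneg: "0 \<le> op2norm (B::real^'n::finite^'m::finite)"
  unfolding op2norm_def by (rule onorm_pos_le) (simp add: matrix_vector_mul_bounded_linear)

lemma part_a:
  fixes A :: "real^'k::finite^'n::finite"
  assumes inj: "\<And>y. A *v y = 0 \<Longrightarrow> y = 0"
    and lo: "\<And>k. sm \<le> p$k" and hi: "\<And>k. p$k \<le> sp" and sm: "sm > 0"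
  shows "norm (xs A p d) \<le> op2norm (pinv A) * sqrt (sp/sm) * norm d"
    and "norm (diagm p *v res A p d) \<le> sp * norm d"
proof -
  have p: "\<And>k. p$k > 0" using lo sm by (meson less_le_trans)
  have p0: "\<And>k. p$k \<ge> 0" using p less_imp_le by blast
  have sp: "sp > 0" using lo hi sm by (meson less_le_trans)
  have dec: "d = res A p d + A *v xs A p d" by (simp add: res_def)
  have o: "transpose A *v (diagm p *v res A p d) = 0"
    by (rule res_orth) (use inj p in auto)
  note py = pyth[OF o p0, where y="xs A p d", folded dec]
  have "sm * (norm (A *v xs A p d))^2 \<le> sp * (norm d)^2"
    using wn_lower[OF lo] wn_upper[OF hi] py(2) by (meson order_trans)
  then have "(norm (A *v xs A p d))^2 \<le> (sp/sm) * (norm d)^2"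
    using sm by (simp add: field_simps)
  then have a1: "norm (A *v xs A p d) \<le> sqrt (sp/sm) * norm d"
    by (rule sq_to_le) (use sm sp in auto)
  have "norm (xs A p d) \<le> op2norm (pinv A) * norm (A *v xs A p d)" by (rule pinv_bound) (use inj in auto)
  also have "\<dots> \<le> op2norm (pinv A) * (sqrt (sp/sm) * norm d)"
    by (rule mult_left_mono[OF a1 kappa_nonneg])
  finally show "norm (xs A p d) \<le> op2norm (pinv A) * sqrt (sp/sm) * norm d" by (simp add: mult_ac)
  have "(norm (diagm p *v res A p d))^2 \<le> sp * wn p (res A p d)" by (rule Dnorm[OF p0 hi])
  also have "\<dots> \<le> sp * (sp * (norm d)^2)"
    using py(1) wn_upper[OF hi, of d] sp by (intro mult_left_mono) auto
  finally have "(norm (diagm p *v res A p d))^2 \<le> sp^2 * (norm d)^2" by (simp add: power2_eq_square)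
  then have "norm (diagm p *v res A p d) \<le> sqrt (sp^2) * norm d"
    by (rule sq_to_le) auto
  then show "norm (diagm p *v res A p d) \<le> sp * norm d" using sp by simp
qed




lemma part_b:
  fixes A :: "real^'k::finite^'n::finite"
  assumes inj: "\<And>y. A *v y = 0 \<Longrightarrow> y = 0"
    and lo1: "\<And>k. sm \<le> p1$k" and hi1: "\<And>k. p1$k \<le> sp"
    and lo2: "\<And>k. sm \<le> p2$k" and hi2: "\<And>k. p2$k \<le> sp" and sm: "sm > 0"
    and g: "norm g \<le> C1"
  shows "norm (xs A p1 g - xs A p2 g) \<le> op2norm (pinv A) * sqrt (sp/sm) * (C1/sm * norm (p1 - p2))"
    and "norm (diagm p1 *v res A p1 g - diagm p2 *v res A p2 g) \<le> sp * (C1/sm * norm (p1 - p2))"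
proof -
  have p1: "\<And>k. p1$k > 0" using lo1 sm by (meson less_le_trans)
  have p2: "\<And>k. p2$k > 0" using lo2 sm by (meson less_le_trans)
  have p10: "\<And>k. p1$k \<ge> 0" using p1 less_imp_le by blast
  have p20: "\<And>k. p2$k \<ge> 0" using p2 less_imp_le by blast
  have sp: "sp > 0" using lo1 hi1 sm by (meson less_le_trans)
  have C1: "C1 \<ge> 0" using g norm_ge_zero order_trans by blast
  define r1 where "r1 = res A p1 g"
  define r2 where "r2 = res A p2 g"
  define z where "z = xs A p1 g - xs A p2 g"
  define w where "w = (\<chi> k. (p1$k - p2$k) * r2$k / p1$k)"
  define s where "s = w - A *v z"
  define dp where "dp = norm (p1 - p2)"
  have o1: "transpose A *v (diagm p1 *v r1) = 0"
    unfolding r1_def by (rule res_orth) (use inj p1 in auto)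
  have o2: "transpose A *v (diagm p2 *v r2) = 0"
    unfolding r2_def by (rule res_orth) (use inj p2 in auto)
  have Az: "A *v z = r2 - r1"
    by (simp add: z_def r1_def r2_def res_def matrix_vector_mult_diff_distrib)
  have Ds: "diagm p1 *v s = diagm p1 *v r1 - diagm p2 *v r2"
  proof -
    have "p1$k * (w$k - (r2$k - r1$k)) = p1$k * r1$k - p2$k * r2$k" for k
      using p1[of k] by (simp add: w_def field_simps)
    then show ?thesis by (simp add: vec_eq_iff diag_mv s_def Az)
  qed
  have os: "transpose A *v (diagm p1 *v s) = 0"
    by (simp only: Ds matrix_vector_mult_diff_distrib o1 o2 diff_zero)
  have wdec: "w = s + A *v z" by (simp add: s_def)
  note py = pyth[OF os p10, where y=z, folded wdec]
  have g2dec: "g = r2 + A *v xs A p2 g" by (simp add: r2_def res_def)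
  note py2 = pyth[OF o2 p20, where y="xs A p2 g", folded g2dec]
  have "sm * (norm r2)^2 \<le> sp * (norm g)^2"
    using wn_lower[OF lo2, of r2] wn_upper[OF hi2, of g] py2(1) by linarith
  also have "\<dots> \<le> sp * C1^2"
    using g sp by (intro mult_left_mono power_mono) auto
  finally have r2b: "(norm r2)^2 \<le> sp * C1^2 / sm" using sm by (simp add: field_simps)
  have "wn p1 w \<le> (\<Sum>k\<in>UNIV. (p1$k - p2$k)^2 * ((norm r2)^2 / sm))"
    unfolding wn_def
  proof (rule sum_mono)
    fix k
    have e: "p1$k * (w$k)^2 = (p1$k - p2$k)^2 * ((r2$k)^2 / p1$k)"
      using p1[of k] by (simp add: w_def power2_eq_square field_simps)
    have "(r2$k)^2 \<le> (norm r2)^2"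
      using component_le_norm_cart[of r2 k] by (metis abs_ge_zero power2_abs power_mono)
    then have "(r2$k)^2 / p1$k \<le> (norm r2)^2 / sm"
      using lo1[of k] sm by (intro frac_le) auto
    then show "p1$k * (w$k)^2 \<le> (p1$k - p2$k)^2 * ((norm r2)^2 / sm)"
      unfolding e by (intro mult_left_mono) auto
  qed
  also have "\<dots> = dp^2 * ((norm r2)^2 / sm)"
    unfolding dp_def norm2_vec[of "p1 - p2"] sum_distrib_right by simp
  also have "\<dots> \<le> dp^2 * (sp * C1^2 / sm / sm)"
    using r2b sm by (intro mult_left_mono divide_right_mono) auto
  finally have wb: "wn p1 w \<le> dp^2 * (sp * C1^2 / sm / sm)" .
  have "sm * (norm (A *v z))^2 \<le> dp^2 * (sp * C1^2 / sm / sm)"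
    using wn_lower[OF lo1, of "A *v z"] py(2) wb by linarith
  then have "(norm (A *v z))^2 \<le> (sp/sm) * (C1/sm * dp)^2"
    using sm by (simp add: field_simps power2_eq_square)
  then have a1: "norm (A *v z) \<le> sqrt (sp/sm) * (C1/sm * dp)"
    by (rule sq_to_le) (use sm sp C1 dp_def in auto)
  have "norm z \<le> op2norm (pinv A) * norm (A *v z)" by (rule pinv_bound) (use inj in auto)
  also have "\<dots> \<le> op2norm (pinv A) * (sqrt (sp/sm) * (C1/sm * dp))"
    by (rule mult_left_mono[OF a1 kappa_nonneg])
  finally show "norm (xs A p1 g - xs A p2 g) \<le> op2norm (pinv A) * sqrt (sp/sm) * (C1/sm * norm (p1 - p2))"
    by (simp add: z_def dp_def mult_ac)
  have "(norm (diagm p1 *v s))^2 \<le> sp * wn p1 s" by (rule Dnorm[OF p10 hi1])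
  also have "\<dots> \<le> sp * (dp^2 * (sp * C1^2 / sm / sm))"
    using py(1) wb sp by (intro mult_left_mono) auto
  also have "\<dots> = sp^2 * (C1/sm * dp)^2" by (simp add: power2_eq_square field_simps)
  finally have "norm (diagm p1 *v s) \<le> sqrt (sp^2) * (C1/sm * dp)"
    by (rule sq_to_le) (use sm sp C1 dp_def in auto)
  then show "norm (diagm p1 *v res A p1 g - diagm p2 *v res A p2 g) \<le> sp * (C1/sm * norm (p1 - p2))"
    using sp by (simp add: Ds r1_def r2_def dp_def)
qed




lemma sum_pair_UNIV:
  "(\<Sum>x\<in>(UNIV::('a::finite \<times> 'b::finite) set). f x) = (\<Sum>i\<in>UNIV. \<Sum>j\<in>UNIV. f (i,j))"
  using sum.cartesian_product[of "\<lambda>i j. f (i,j)" UNIV UNIV, unfolded UNIV_Times_UNIV] by simp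

lemma mat_expand:
  fixes X :: "real^'c::finite^'r::finite"
  shows "X = (\<Sum>(k,l)\<in>UNIV. X$k$l *\<^sub>R axis k (axis l 1))"
proof -
  have "(\<Sum>(k,l)\<in>UNIV. X$k$l *\<^sub>R axis k (axis l (1::real))) $ i $ j = X $ i $ j" for i j
  proof -
    have "(\<Sum>(k,l)\<in>UNIV. X$k$l *\<^sub>R axis k (axis l (1::real))) $ i $ j
        = (\<Sum>x\<in>UNIV. (if x = (i,j) then X $ i $ j else 0))"
      unfolding sum_component by (rule sum.cong) (auto simp: axis_def split: if_splits)
    then show ?thesis by simp
  qed
  then show ?thesis by (simp add: vec_eq_iff)
qed

lemma hess_onorm:
  fixes L :: "real^'c::finite^'r::finite \<Rightarrow> real"
  assumes d: "grad L differentiable (at P)"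
  shows "onorm (frechet_derivative (grad L) (at P)) \<le> hessian_frob L P"
proof (rule onorm_le)
  let ?H = "frechet_derivative (grad L) (at P)"
  have lin: "linear ?H" using d frechet_derivative_works has_derivative_linear by blast
  fix X :: "real^'c^'r"
  have "?H X = (\<Sum>(k,l)\<in>UNIV. X$k$l *\<^sub>R ?H (axis k (axis l 1)))"
    by (subst mat_expand) (simp add: real_vector.linear_sum[OF lin] linear_cmul[OF lin] case_prod_beta)
  then have "norm (?H X) \<le> (\<Sum>(k,l)\<in>UNIV. \<bar>X$k$l\<bar> * \<bar>norm (?H (axis k (axis l 1)))\<bar>)"
    by (auto intro: order_trans[OF norm_sum] simp: case_prod_beta)
  also have "\<dots> \<le> L2_set (\<lambda>(k,l). X$k$l) UNIV * L2_set (\<lambda>(k,l). norm (?H (axis k (axis l 1)))) UNIV"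
    using L2_set_mult_ineq[of "\<lambda>(k,l). X$k$l" "\<lambda>(k,l). norm (?H (axis k (axis l 1)))" UNIV]
    by (simp add: case_prod_beta)
  also have "\<dots> = hessian_frob L P * norm X"
  proof -
    have "L2_set (\<lambda>(k,l). X$k$l) UNIV = norm X"
      unfolding L2_set_def sum_pair_UNIV
      by (simp add: norm2_mat[symmetric])
    moreover have "L2_set (\<lambda>(k,l). norm (?H (axis k (axis l 1)))) UNIV = hessian_frob L P"
      unfolding L2_set_def hessian_frob_def by (simp add: case_prod_beta)
    ultimately show ?thesis by simp
  qed
  finally show "norm (?H X) \<le> hessian_frob L P * norm X" .
qed


lemma vecm_diff: "vecm (P - Q) = vecm P - vecm Q"
  by (simp add: vecm_def vec_eq_iff)

lemma vecm_nth: "vecm P $ k = P $ fst k $ snd k"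
  by (simp add: vecm_def)

theorem theorem3:
  fixes C Pstar Ptau :: "real^'c::finite option^'r::finite"
    and a :: "real^'r" and b :: "real^'c option"
    and L :: "real^'c option^'r \<Rightarrow> real"
    and lam sp sm C1 C2 eps :: real
  assumes m2: "CARD('r) \<ge> 2"
    and lam: "lam > 0"
    and a: "prob_simplex (\<lambda>i. a$i)" "\<forall>i. a$i > 0"
    and b: "prob_simplex (\<lambda>j. b$j)" "\<forall>j. b$j > 0"
    and Pstar: "Pstar = sinkhorn_plan lam C a b"
    and L: "twice_cont_diff L"
    and pos: "sp > 0" "sm > 0" "C1 > 0" "C2 > 0" "eps > 0"
    and close: "norm (Pstar - Ptau) < eps"
    and ball: "\<forall>P. norm (P - Pstar) < eps \<longrightarrow>
                 (\<forall>i j. P$i$j \<ge> sm) \<and> (\<forall>i j. P$i$j \<le> sp)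
                 \<and> norm (grad L P) \<le> C1 \<and> hessian_frob L P \<le> C2"
  shows "norm (g_ab L Pstar - g_ab L Ptau)
           \<le> op2norm (pinv (Etil :: real^('r + 'c)^('r \<times> 'c option))) * sqrt (sp / sm)
               * (C1 / sm + C2) * norm (Pstar - Ptau)
         \<and> norm (g_C lam L Pstar - g_C lam L Ptau)
           \<le> (1 / lam) * sp * (C1 / sm + C2) * norm (Pstar - Ptau)"
proof -
  let ?E = "Etil :: real^('r + 'c)^('r \<times> 'c option)"
  let ?k = "op2norm (pinv ?E)"
  have inj: "\<And>y. ?E *v y = 0 \<Longrightarrow> y = 0" by (rule Etil_inj)
  have gab: "g_ab L P = xs ?E (vecm P) (vecm (grad L P))" for P
    by (simp add: g_ab_def xs_def Let_def)
  have gC: "g_C lam L P = - (1/lam) *\<^sub>R (diagm (vecm P) *v res ?E (vecm P) (vecm (grad L P)))" for P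
    by (simp add: g_C_def res_def gab[symmetric] Let_def matrix_vector_mult_diff_distrib
        matrix_vector_mul_assoc)
  have inS: "norm (Pstar - Pstar) < eps" "norm (Ptau - Pstar) < eps"
    using pos close by (auto simp: norm_minus_commute)
  define p1 where "p1 = vecm Pstar"
  define p2 where "p2 = vecm Ptau"
  define g1 where "g1 = vecm (grad L Pstar)"
  define g2 where "g2 = vecm (grad L Ptau)"
  define d where "d = norm (Pstar - Ptau)"
  have lo1: "\<And>k. sm \<le> p1$k" and hi1: "\<And>k. p1$k \<le> sp"
    using ball inS(1) by (auto simp: p1_def vecm_nth)
  have lo2: "\<And>k. sm \<le> p2$k" and hi2: "\<And>k. p2$k \<le> sp"
    using ball inS(2) by (auto simp: p2_def vecm_nth)
  have g2b: "norm g2 \<le> C1" using ball inS(2) by (simp add: g2_def norm_vecm)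
  have dp: "norm (p1 - p2) = d" by (simp add: p1_def p2_def d_def vecm_diff[symmetric] norm_vecm)
  have dg: "norm (g1 - g2) \<le> C2 * d"
  proof -
    have "norm (grad L Pstar - grad L Ptau) \<le> C2 * norm (Pstar - Ptau)"
    proof (rule differentiable_bound[where S="ball Pstar eps" and f' = "\<lambda>x. frechet_derivative (grad L) (at x)"])
      show "convex (ball Pstar eps)" by simp
      fix x assume x: "x \<in> ball Pstar eps"
      have dx: "grad L differentiable (at x)" using L unfolding twice_cont_diff_def by blast
      show "(grad L has_derivative frechet_derivative (grad L) (at x)) (at x within ball Pstar eps)"
        using dx frechet_derivative_works has_derivative_at_withinI by blast
      have "norm (x - Pstar) < eps" using x by (simp add: dist_norm norm_minus_commute)
      then have "hessian_frob L x \<le> C2" using ball by blast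
      then show "onorm (frechet_derivative (grad L) (at x)) \<le> C2"
        using hess_onorm[OF dx] by linarith
    next
      show "Pstar \<in> ball Pstar eps" using pos by simp
      show "Ptau \<in> ball Pstar eps" using close by (simp add: dist_norm)
    qed
    then show ?thesis by (simp add: g1_def g2_def d_def vecm_diff[symmetric] norm_vecm)
  qed
  have sm: "sm > 0" using pos by simp
  have sp0: "sp \<ge> 0" using pos by simp
  have kq: "?k * sqrt (sp/sm) \<ge> 0" using kappa_nonneg[of "pinv ?E"] pos by simp
  note A = part_a[where A="?E", OF _ lo1 hi1 sm, of "g1 - g2"]
  note B = part_b[where A="?E", OF _ lo1 hi1 lo2 hi2 sm g2b]
  have A1: "norm (xs ?E p1 (g1 - g2)) \<le> ?k * sqrt (sp/sm) * norm (g1 - g2)"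
    by (rule A(1)) (use inj in auto)
  have A2: "norm (diagm p1 *v res ?E p1 (g1 - g2)) \<le> sp * norm (g1 - g2)"
    by (rule A(2)) (use inj in auto)
  have B1: "norm (xs ?E p1 g2 - xs ?E p2 g2) \<le> ?k * sqrt (sp/sm) * (C1/sm * d)"
    using B(1) inj dp by auto
  have B2: "norm (diagm p1 *v res ?E p1 g2 - diagm p2 *v res ?E p2 g2) \<le> sp * (C1/sm * d)"
    using B(2) inj dp by auto
  have c1: "norm (g_ab L Pstar - g_ab L Ptau) \<le> ?k * sqrt (sp/sm) * (C1/sm + C2) * d"
  proof -
    have "g_ab L Pstar - g_ab L Ptau = xs ?E p1 (g1 - g2) + (xs ?E p1 g2 - xs ?E p2 g2)"
      by (simp add: gab p1_def p2_def g1_def g2_def xs_diff)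
    then have "norm (g_ab L Pstar - g_ab L Ptau)
        \<le> norm (xs ?E p1 (g1 - g2)) + norm (xs ?E p1 g2 - xs ?E p2 g2)"
      by (metis norm_triangle_ineq)
    also have "\<dots> \<le> ?k * sqrt (sp/sm) * (C2 * d) + ?k * sqrt (sp/sm) * (C1/sm * d)"
      using A1 B1 mult_left_mono[OF dg kq] by linarith
    also have "\<dots> = ?k * sqrt (sp/sm) * (C1/sm + C2) * d" by (simp add: algebra_simps)
    finally show ?thesis .
  qed
  have c2: "norm (g_C lam L Pstar - g_C lam L Ptau) \<le> (1/lam) * sp * (C1/sm + C2) * d"
  proof -
    have "g_C lam L Pstar - g_C lam L Ptau = - (1/lam) *\<^sub>R
        (diagm p1 *v res ?E p1 (g1 - g2) + (diagm p1 *v res ?E p1 g2 - diagm p2 *v res ?E p2 g2))"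
      by (simp add: gC p1_def p2_def g1_def g2_def res_diff matrix_vector_mult_diff_distrib
          algebra_simps)
    then have "norm (g_C lam L Pstar - g_C lam L Ptau) = (1/lam) *
        norm (diagm p1 *v res ?E p1 (g1 - g2) + (diagm p1 *v res ?E p1 g2 - diagm p2 *v res ?E p2 g2))"
      using lam by simp
    also have "\<dots> \<le> (1/lam) * (sp * (C2 * d) + sp * (C1/sm * d))"
    proof (rule mult_left_mono)
      show "0 \<le> 1/lam" using lam by simp
      have "norm (diagm p1 *v res ?E p1 (g1 - g2) + (diagm p1 *v res ?E p1 g2 - diagm p2 *v res ?E p2 g2))
         \<le> norm (diagm p1 *v res ?E p1 (g1 - g2)) + norm (diagm p1 *v res ?E p1 g2 - diagm p2 *v res ?E p2 g2)"
        by (rule norm_triangle_ineq)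
      then show "norm (diagm p1 *v res ?E p1 (g1 - g2) + (diagm p1 *v res ?E p1 g2 - diagm p2 *v res ?E p2 g2))
         \<le> sp * (C2 * d) + sp * (C1/sm * d)"
        using A2 B2 mult_left_mono[OF dg sp0] by linarith
    qed
    also have "\<dots> = (1/lam) * sp * (C1/sm + C2) * d" by (simp add: algebra_simps)
    finally show ?thesis .
  qed
  show ?thesis using c1 c2 by (simp add: d_def)
qed

end
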